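(* Let $V$ be a finite vocabulary, each word $x\in V$ having a nonempty perturbation set $P_x\subseteq V$. For words $x,x'$ write $n_x=|P_x|$, $n_{x'}=|P_{x'}|$ and $n_{x,x'}=|P_x\cap P_{x'}|$. For $X=x_1,\ldots,x_L\in V^L$ let $\Pi_X$ be the probability mass function on $V^L$ with $\Pi_X(Z)=\prod_{i=1}^L\mathbb{I}\{z_i\in P_{x_i}\}/|P_{x_i}|$. Then for any sentences $X=x_1,\ldots,x_L$ and $X'=x'_1,\ldots,x'_L$ in $V^L$ and any $\lambda\ge0$, $$\sum_{Z\in V^L}\big(\lambda\Pi_X(Z)-\Pi_{X'}(Z)\big)_+=\lambda\Big[1-\prod_{j\in[L],x_j\ne x'_j}\frac{n_{x_j,x'_j}}{n_{x_j}}\Big]+\Big[\prod_{j\in[L],x_j\ne x'_j}\frac{n_{x_j,x'_j}}{n_{x_j}}\Big]\Big(\lambda-\prod_{j\in[L],x_j\ne x'_j}\frac{n_{x_j}}{n_{x'_j}}\Big)_+,$$ where $(s)_+=\max(s,0)$. Consequently, if $x'_j\in S_{x_j}$ for all $j$ and $|P_x|=|P_{x'}|$ for every word $x$ and every $x'\in S_x$ (where $S_x\subseteq V$ are given synonym sets), then $$\sum_{Z\in V^L}\big(\lambda\Pi_X(Z)-\Pi_{X'}(Z)\big)_+=\lambda\Big[1-\prod_{j\in[L],x_j\ne x'_j}\frac{n_{x_j,x'_j}}{n_{x_j}}\Big]+\Big[\prod_{j\in[L],x_j\ne x'_j}\frac{n_{x_j,x'_j}}{n_{x_j}}\Big](\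lambda-1)_+.$$
   Context: Empty products equal $1$. *)

theory Defs
  imports Complex_Main
begin

definition sentences :: "'a set \<Rightarrow> nat \<Rightarrow> 'a list set" where
  "sentences V L = {Z. length Z = L \<and> set Z \<subseteq> V}"

definition pert_pmf :: "('a \<Rightarrow> 'a set) \<Rightarrow> 'a list \<Rightarrow> 'a list \<Rightarrow> real" where
  "pert_pmf P X Z = (\<Prod>i<length X. (if Z ! i \<in> P (X ! i) then 1 else 0) / real (card (P (X ! i))))"

definition pos_part :: "real \<Rightarrow> real" where
  "pos_part s = max s 0"

end

theory Submission
  imports Defs
begin

lemma card_lists_prod:
  "(\<And>i. i < L \<Longrightarrow> finite (F i)) \<Longrightarrow>
   card {Z. length Z = L \<and> (\<forall>i<L. Z!i \<in> F i)} = (\<Prod>i<L. card (F i))"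
proof (induction L arbitrary: F)
  case 0
  have "{Z::'a list. length Z = 0 \<and> (\<forall>i<0. Z!i \<in> F i)} = {[]}" by auto
  then show ?case by simp
next
  case (Suc L)
  let ?T = "{Z. length Z = L \<and> (\<forall>i<L. Z!i \<in> F (Suc i))}"
  have eq: "{Z. length Z = Suc L \<and> (\<forall>i<Suc L. Z!i \<in> F i)} = (\<lambda>(a,Z). a#Z) ` (F 0 \<times> ?T)"
  proof (rule set_eqI, rule iffI)
    fix Z assume "Z \<in> {Z. length Z = Suc L \<and> (\<forall>i<Suc L. Z!i \<in> F i)}"
    then obtain a W where Z: "Z = a # W" "length W = L" and h: "\<forall>i<Suc L. Z!i \<in> F i"
      by (auto simp: length_Suc_conv)
    have "a \<in> F 0" using h Z by auto
    moreover have "\<forall>i<L. W!i \<in> F (Suc i)" using h Z by auto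
    ultimately show "Z \<in> (\<lambda>(a,Z). a#Z) ` (F 0 \<times> ?T)" using Z by force
  next
    fix Z assume "Z \<in> (\<lambda>(a,Z). a#Z) ` (F 0 \<times> ?T)"
    then show "Z \<in> {Z. length Z = Suc L \<and> (\<forall>i<Suc L. Z!i \<in> F i)}"
      by (auto simp: less_Suc_eq_0_disj)
  qed
  have inj: "inj_on (\<lambda>(a,Z). a#Z) (F 0 \<times> ?T)" by (auto simp: inj_on_def)
  have "card ?T = (\<Prod>i<L. card (F (Suc i)))" using Suc by auto
  then show ?case unfolding eq card_image[OF inj] card_cartesian_product
    by (simp del: prod.lessThan_Suc add: prod.lessThan_Suc_shift)
qed
theorem lemma2:
  fixes V :: "'a set" and P S :: "'a \<Rightarrow> 'a set" and L :: nat
    and X X' :: "'a list" and lam :: real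
  assumes "finite V"
    and "\<And>x. x \<in> V \<Longrightarrow> P x \<subseteq> V \<and> P x \<noteq> {}"
    and "\<And>x. x \<in> V \<Longrightarrow> S x \<subseteq> V"
    and "X \<in> sentences V L" and "X' \<in> sentences V L"
    and "lam \<ge> 0"
  shows "(\<Sum>Z\<in>sentences V L. pos_part (lam * pert_pmf P X Z - pert_pmf P X' Z)) =
           lam * (1 - (\<Prod>j\<in>{j. j < L \<and> X ! j \<noteq> X' ! j}.
                    real (card (P (X ! j) \<inter> P (X' ! j))) / real (card (P (X ! j)))))
         + (\<Prod>j\<in>{j. j < L \<and> X ! j \<noteq> X' ! j}.
                    real (card (P (X ! j) \<inter> P (X' ! j))) / real (card (P (X ! j))))
           * pos_part (lam - (\<Prod>j\<in>{j. j < L \<and> X ! j \<noteq> X' ! j}.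
                    real (card (P (X ! j))) / real (card (P (X' ! j)))))
       \<and> ((\<forall>j<L. X' ! j \<in> S (X ! j)) \<and> (\<forall>x\<in>V. \<forall>x'\<in>S x. card (P x) = card (P x'))
          \<longrightarrow> (\<Sum>Z\<in>sentences V L. pos_part (lam * pert_pmf P X Z - pert_pmf P X' Z)) =
           lam * (1 - (\<Prod>j\<in>{j. j < L \<and> X ! j \<noteq> X' ! j}.
                    real (card (P (X ! j) \<inter> P (X' ! j))) / real (card (P (X ! j)))))
         + (\<Prod>j\<in>{j. j < L \<and> X ! j \<noteq> X' ! j}.
                    real (card (P (X ! j) \<inter> P (X' ! j))) / real (card (P (X ! j))))
           * pos_part (lam - 1))"
proof -
  have lenX: "length X = L" and lenX': "length X' = L" and sX: "set X \<subseteq> V" and sX': "set X' \<subseteq> V"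
    using assms(4,5) by (auto simp: sentences_def)
  have XV: "X!i \<in> V" "X'!i \<in> V" if "i < L" for i
    using that lenX lenX' sX sX' nth_mem by (metis subsetD)+
  define n where "n i = real (card (P (X!i)))" for i
  define n' where "n' i = real (card (P (X'!i)))" for i
  define k where "k i = real (card (P (X!i) \<inter> P (X'!i)))" for i
  have finP: "finite (P x)" if "x \<in> V" for x using assms(1,2) that finite_subset by metis
  have npos: "n i > 0" "n' i > 0" if "i < L" for i
    unfolding n_def n'_def using XV[OF that] finP assms(2) by (auto simp: card_gt_0_iff)
  define D where "D = {j. j < L \<and> X ! j \<noteq> X' ! j}"
  have DL: "D \<subseteq> {..<L}" by (auto simp: D_def)
  define c where "c = (\<Prod>i<L. 1 / n i)"
  define m where "m = (\<Prod>j\<in>D. k j / n j)"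
  define r where "r = (\<Prod>j\<in>D. n j / n' j)"
  have cpos: "c > 0" unfolding c_def using npos by (auto intro: prod_pos)
  define A where "A = {Z. length Z = L \<and> (\<forall>i<L. Z!i \<in> P (X!i))}"
  define B where "B = {Z. length Z = L \<and> (\<forall>i<L. Z!i \<in> P (X!i) \<inter> P (X'!i))}"
  define SV where "SV = sentences V L"
  have finSV: "finite SV" unfolding SV_def sentences_def
    using finite_lists_length_eq[OF assms(1)] by (simp add: conj_commute)
  have ASV: "A \<subseteq> SV"
  proof
    fix Z assume "Z \<in> A"
    then have "length Z = L" "\<forall>i<L. Z!i \<in> P (X!i)" by (auto simp: A_def)
    moreover have "P (X!i) \<subseteq> V" if "i < L" for i using assms(2) XV[OF that] by auto
    ultimately have "set Z \<subseteq> V" by (auto simp: set_conv_nth)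
    then show "Z \<in> SV" using \<open>length Z = L\<close> by (simp add: SV_def sentences_def)
  qed
  have BA: "B \<subseteq> A" by (auto simp: A_def B_def)
  have finA: "finite A" using ASV finSV finite_subset by blast
  define f where "f Z = pos_part (lam * pert_pmf P X Z - pert_pmf P X' Z)" for Z
  have pnn: "pert_pmf P Y Z \<ge> 0" for Y Z unfolding pert_pmf_def by (auto intro: prod_nonneg)
  have pA: "pert_pmf P X Z = c" if "Z \<in> A" for Z
    unfolding pert_pmf_def c_def lenX n_def using that by (auto simp: A_def intro!: prod.cong)
  have h1: "f Z = 0" if "Z \<in> SV - A" for Z
  proof -
    from that obtain i where i: "i < L" "Z!i \<notin> P (X!i)" by (auto simp: A_def SV_def sentences_def)
    have "pert_pmf P X Z = 0" unfolding pert_pmf_def lenX using i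
      by (intro prod_zero) auto
    then show ?thesis unfolding f_def pos_part_def using pnn[of X' Z] by simp
  qed
  have h2: "f Z = lam * c" if "Z \<in> A - B" for Z
  proof -
    from that obtain i where i: "i < L" "Z!i \<notin> P (X'!i)" by (auto simp: A_def B_def)
    have "pert_pmf P X' Z = 0" unfolding pert_pmf_def lenX' using i
      by (intro prod_zero) auto
    then show ?thesis unfolding f_def pos_part_def using pA[of Z] that cpos assms(6) by simp
  qed
  have crr: "(\<Prod>i<L. 1 / n' i) = c * r"
  proof -
    have e1: "(\<Prod>i<L. 1 / n' i) = (\<Prod>i\<in>{..<L} - D. 1 / n' i) * (\<Prod>i\<in>D. 1 / n' i)"
      by (rule prod.subset_diff[OF DL]) simp
    have e2: "c = (\<Prod>i\<in>{..<L} - D. 1 / n i) * (\<Prod>i\<in>D. 1 / n i)"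
      unfolding c_def by (rule prod.subset_diff[OF DL]) simp
    have e3: "(\<Prod>i\<in>{..<L} - D. 1 / n' i) = (\<Prod>i\<in>{..<L} - D. 1 / n i)"
      by (rule prod.cong) (auto simp: D_def n_def n'_def)
    have e4: "(\<Prod>i\<in>D. 1 / n i) * r = (\<Prod>i\<in>D. 1 / n' i)"
      unfolding r_def prod.distrib[symmetric]
      by (rule prod.cong) (use DL npos in force)+
    show ?thesis using e1 e2 e3 e4 by (simp add: mult.assoc)
  qed
  have h3: "f Z = c * pos_part (lam - r)" if "Z \<in> B" for Z
  proof -
    have "pert_pmf P X' Z = (\<Prod>i<L. 1 / n' i)"
      unfolding pert_pmf_def lenX' n'_def using that by (auto simp: B_def intro!: prod.cong)
    then have "pert_pmf P X' Z = c * r" using crr by simp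
    moreover have "pert_pmf P X Z = c" using pA that BA by auto
    ultimately have "f Z = max (c * (lam - r)) 0" unfolding f_def pos_part_def
      by (simp add: algebra_simps)
    also have "\<dots> = c * max (lam - r) 0" using cpos
      by (simp add: max_def mult_le_0_iff)
    finally show ?thesis by (simp add: pos_part_def)
  qed
  have cardA: "real (card A) * c = 1"
  proof -
    have "card A = (\<Prod>i<L. card (P (X!i)))" unfolding A_def
      by (rule card_lists_prod) (use XV finP in auto)
    then have "real (card A) = (\<Prod>i<L. n i)" by (simp add: n_def)
    then have "real (card A) * c = (\<Prod>i<L. n i * (1 / n i))"
      unfolding c_def by (simp only: prod.distrib)
    also have "\<dots> = 1" by (rule prod.neutral) (use npos in \<open>force simp del: divide_self_if\<close>)
    finally show ?thesis .
  qed
  have cardB: "real (card B) * c = m"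
  proof -
    have "card B = (\<Prod>i<L. card (P (X!i) \<inter> P (X'!i)))" unfolding B_def
      by (rule card_lists_prod) (use XV finP in auto)
    then have "real (card B) = (\<Prod>i<L. k i)" by (simp add: k_def)
    then have "real (card B) * c = (\<Prod>i<L. k i / n i)" unfolding c_def
      by (simp add: prod.distrib[symmetric])
    also have "\<dots> = (\<Prod>i\<in>{..<L} - D. k i / n i) * (\<Prod>i\<in>D. k i / n i)"
      by (rule prod.subset_diff[OF DL]) simp
    also have "(\<Prod>i\<in>{..<L} - D. k i / n i) = 1"
    proof (rule prod.neutral, rule ballI)
      fix i assume "i \<in> {..<L} - D"
      then have "i < L" "X!i = X'!i" by (auto simp: D_def)
      then show "k i / n i = 1" using npos(1)[of i] by (simp add: k_def n_def)
    qed
    finally show ?thesis by (simp add: m_def)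
  qed
  have sumeq: "(\<Sum>Z\<in>SV. f Z) = lam * (1 - m) + m * pos_part (lam - r)"
  proof -
    have "(\<Sum>Z\<in>SV. f Z) = (\<Sum>Z\<in>SV - A. f Z) + (\<Sum>Z\<in>A. f Z)"
      by (rule sum.subset_diff[OF ASV finSV])
    also have "(\<Sum>Z\<in>SV - A. f Z) = 0" using h1 by simp
    also have "(\<Sum>Z\<in>A. f Z) = (\<Sum>Z\<in>A - B. f Z) + (\<Sum>Z\<in>B. f Z)"
      by (rule sum.subset_diff[OF BA finA])
    also have "(\<Sum>Z\<in>A - B. f Z) = real (card (A - B)) * (lam * c)" using h2 by simp
    also have "(\<Sum>Z\<in>B. f Z) = real (card B) * (c * pos_part (lam - r))" using h3 by simp
    also have "real (card (A - B)) = real (card A) - real (card B)"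
      using card_Diff_subset[OF finite_subset[OF BA finA] BA] card_mono[OF finA BA] by simp
    also have "0 + ((real (card A) - real (card B)) * (lam * c) + real (card B) * (c * pos_part (lam - r)))
        = lam * (real (card A) * c) - lam * (real (card B) * c) + (real (card B) * c) * pos_part (lam - r)"
      by (simp add: algebra_simps)
    finally show ?thesis unfolding cardA cardB by (simp add: algebra_simps)
  qed
  have part1: "(\<Sum>Z\<in>sentences V L. pos_part (lam * pert_pmf P X Z - pert_pmf P X' Z)) =
       lam * (1 - m) + m * pos_part (lam - r)"
    using sumeq by (simp add: f_def SV_def)
  have mE: "m = (\<Prod>j\<in>{j. j < L \<and> X ! j \<noteq> X' ! j}.
                    real (card (P (X ! j) \<inter> P (X' ! j))) / real (card (P (X ! j))))"
    by (simp add: m_def D_def k_def n_def)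
  have rE: "r = (\<Prod>j\<in>{j. j < L \<and> X ! j \<noteq> X' ! j}.
                    real (card (P (X ! j))) / real (card (P (X' ! j))))"
    by (simp add: r_def D_def n'_def n_def)
  have part2: "r = 1" if "(\<forall>j<L. X' ! j \<in> S (X ! j)) \<and> (\<forall>x\<in>V. \<forall>x'\<in>S x. card (P x) = card (P x'))"
    unfolding r_def
  proof (rule prod.neutral, rule ballI)
    fix j assume "j \<in> D"
    then have j: "j < L" by (auto simp: D_def)
    have "n j = n' j" unfolding n_def n'_def using that XV[OF j] j by metis
    then show "n j / n' j = 1" using npos[OF j] by simp
  qed
  show ?thesis using part1 part2 mE rE by simp
qed

end
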